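(* Let $A \in \mathbb{R}^{n\times n}$ be a full-rank real matrix all of whose eigenvalues have negative real part, let $P = P^\top \in \mathbb{R}^{n\times n}$, and set $U(\bm{x}) = \tfrac12 \bm{x}^\top P \bm{x}$. Then the decomposition $A\bm{x} = -\nabla U(\bm{x}) + f_U(\bm{x})$ holds for all $\bm{x}\in\mathbb{R}^n$ with $f_U(\bm{x}) = (A+P)\bm{x}$. Suppose further that $P$ is an optimal solution of the optimization problem \[ \text{maximize } \operatorname{tr}(P) \quad \text{subject to} \quad P = P^\top,\quad P(A+P) \preceq 0 . \] Then $PA + A^\top P + 2P^2 = 0$, and hence $\nabla U(\bm{x}) \cdot f_U(\bm{x}) = 0$ for all $\bm{x}\in\mathbb{R}^n$.
   Context: For a (not necessarily symmetric) square matrix $M$, the constraint $M \preceq 0$ means $\bm{x}^\top M \bm{x} \le 0$ for all $\bm{x}\in\mathbb{R}^n$, i.e. the symmetric part $\tfrac12(M+M^\top)$ is negative semidefinite; thus $P(A+P)\preceq 0$ is equivalent to $PA + A^\top P + 2P^2 \preceq 0$. $\operatorname{tr}$ denotes the trace. *)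

theory Defs
  imports "HOL-Analysis.Analysis"
begin

definition cmat :: "real^'n^'n \<Rightarrow> complex^'n^'n" where
  "cmat A = (\<chi> i j. complex_of_real (A $ i $ j))"

definition is_eigenvalue :: "real^'n^'n \<Rightarrow> complex \<Rightarrow> bool" where
  "is_eigenvalue A l \<longleftrightarrow> (\<exists>v::complex^'n. v \<noteq> 0 \<and> cmat A *v v = l *s v)"

text \<open>M \<preceq> 0 for a not necessarily symmetric matrix.\<close>
definition nsd :: "real^'n^'n \<Rightarrow> bool" where
  "nsd M \<longleftrightarrow> (\<forall>x. x \<bullet> (M *v x) \<le> 0)"

definition feasible :: "real^'n^'n \<Rightarrow> real^'n^'n \<Rightarrow> bool" where
  "feasible A P \<longleftrightarrow> transpose P = P \<and> nsd (P ** (A + P))"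

definition optimal :: "real^'n^'n \<Rightarrow> real^'n^'n \<Rightarrow> bool" where
  "optimal A P \<longleftrightarrow> feasible A P \<and> (\<forall>Q. feasible A Q \<longrightarrow> trace Q \<le> trace P)"

end

theory Submission
  imports Defs "HOL-Computational_Algebra.Fundamental_Theorem_Algebra"
begin


lemma inner_mv: "(x::real^'n) \<bullet> (M *v y) = (transpose M *v x) \<bullet> y"
  by (simp add: inner_vec_def matrix_vector_mult_def transpose_def sum_distrib_left
      sum_distrib_right mult_ac) (rule sum.swap)

lemma inner_mv_sym: "transpose M = M \<Longrightarrow> (x::real^'n) \<bullet> (M *v y) = (M *v x) \<bullet> y"
  using inner_mv[of x M y] by simp

definition outer :: "real^'n \<Rightarrow> real^'n^'n" where
  "outer v = (\<chi> i j. v$i * v$j)"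

lemma outer_mv: "outer v *v x = (v \<bullet> x) *\<^sub>R v"
  by (simp add: outer_def matrix_vector_mult_def vec_eq_iff inner_vec_def sum_distrib_left mult_ac)

lemma outer_trace: "trace (outer v) = v \<bullet> v"
  by (simp add: outer_def trace_def inner_vec_def)

lemma outer_sym: "transpose (outer v) = outer v"
  by (simp add: outer_def transpose_def vec_eq_iff mult.commute)

lemma trace_scaleR: "trace (r *\<^sub>R (M::real^'n^'n)) = r * trace M"
  by (simp add: trace_def sum_distrib_left)

lemma transpose_add: "transpose (M + N) = transpose M + transpose (N::real^'n^'n)"
  by (simp add: transpose_def vec_eq_iff)

lemma mv_add: "(M + N) *v x = M *v x + N *v (x::real^'n)"
  by (simp add: matrix_vector_mult_def vec_eq_iff sum.distrib algebra_simps)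

lemma mv_scaleR: "(r *\<^sub>R M) *v x = r *\<^sub>R (M *v (x::real^'n))"
  by (simp add: matrix_vector_mult_def vec_eq_iff sum_distrib_left algebra_simps)

lemma nsd_iff:
  assumes "transpose X = X"
  shows "nsd (X ** (A + X)) \<longleftrightarrow> (\<forall>x. (X *v x) \<bullet> (A *v x) + (X *v x) \<bullet> (X *v x) \<le> 0)"
proof -
  have "x \<bullet> ((X ** (A + X)) *v x) = (X *v x) \<bullet> (A *v x) + (X *v x) \<bullet> (X *v x)" for x
    by (simp add: matrix_vector_mul_assoc[symmetric] mv_add inner_add_right inner_mv_sym[OF assms])
  then show ?thesis unfolding nsd_def by simp
qed



lemma real_ineq:
  fixes n a c eta kap eps X b beta V :: real
  assumes "n \<ge> 0" "a^2 \<le> c*n" "c \<ge> 0" "eta > 0" "kap > 0" "eps > 0" "X \<ge> 0"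
    "\<bar>b\<bar> \<le> beta * X" "beta \<ge> 0" "V \<ge> 0" "kap*eps \<le> 1/3"
    "eps*c*beta^2/(2*kap*eta) \<le> 1/3" "eps*c*V \<le> 1/3" "eps \<le> 1"
  shows "-(1-kap*eps)*n - kap*eps*eta*X^2 + eps*a*b + eps^2*a^2*V \<le> 0"
proof -
  define t where "t = kap*eps"
  have t0: "t > 0" using assms by (simp add: t_def)
  have ab: "a*b \<le> \<bar>a\<bar>*(beta*X)"
  proof -
    have "a*b \<le> \<bar>a\<bar>*\<bar>b\<bar>" by (simp add: abs_mult[symmetric])
    also have "\<dots> \<le> \<bar>a\<bar>*(beta*X)" by (rule mult_left_mono) (use assms in auto)
    finally show ?thesis .
  qed
  have "eps*a*b \<le> eps*(\<bar>a\<bar>*(beta*X))"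
    using mult_left_mono[OF ab, of eps] assms by (simp add: mult.assoc)
  also have "\<dots> \<le> t*eta*X^2/2 + eps^2*a^2*beta^2/(2*t*eta)"
  proof -
    have "0 \<le> (t*eta*X - eps*\<bar>a\<bar>*beta)^2/(2*t*eta)" using t0 assms by simp
    also have "\<dots> = t*eta*X^2/2 + eps^2*\<bar>a\<bar>^2*beta^2/(2*t*eta) - eps*(\<bar>a\<bar>*(beta*X))"
      using t0 assms by (simp add: field_simps power2_eq_square)
    finally show ?thesis by simp
  qed
  also have "eps^2*a^2*beta^2/(2*t*eta) = eps*a^2*beta^2/(2*kap*eta)"
    using assms by (simp add: t_def power2_eq_square)
  also have "\<dots> \<le> eps*(c*n)*beta^2/(2*kap*eta)"
    using assms by (intro divide_right_mono mult_right_mono mult_left_mono) auto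
  also have "\<dots> = (eps*c*beta^2/(2*kap*eta))*n" by simp
  also have "\<dots> \<le> (1/3)*n" by (rule mult_right_mono) (use assms in auto)
  finally have 1: "eps*a*b \<le> t*eta*X^2/2 + (1/3)*n" by simp
  have "eps^2*a^2*V \<le> eps^2*(c*n)*V"
    using assms by (intro mult_right_mono mult_left_mono) auto
  also have "\<dots> = (eps*c*V)*(eps*n)" by (simp add: power2_eq_square)
  also have "\<dots> \<le> (1/3)*(eps*n)" using assms by (intro mult_right_mono) auto
  also have "\<dots> \<le> (1/3)*n" using assms mult_right_mono[of eps 1 n] by simp
  finally have 2: "eps^2*a^2*V \<le> (1/3)*n" by simp
  have 3: "-(1-t)*n \<le> -(2/3)*n" using assms mult_right_mono[of t "1/3" n] by (simp add: t_def algebra_simps)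
  have 4: "0 \<le> t*eta*X^2" using t0 assms by simp
  show ?thesis using 1 2 3 4 unfolding t_def by linarith
qed



definition phi :: "real^'n^'n \<Rightarrow> real^'n^'n \<Rightarrow> real^'n \<Rightarrow> real" where
  "phi A X x = (X *v x) \<bullet> (A *v x) + (X *v x) \<bullet> (X *v x)"

lemma CS_nsd:
  fixes S :: "real^'n^'n"
  assumes symS: "transpose S = S" and nsdS: "\<And>y. y \<bullet> (S *v y) \<le> 0"
  shows "(w \<bullet> (S *v x))^2 \<le> (w \<bullet> (S *v w)) * (x \<bullet> (S *v x))"
proof -
  define al where "al = w \<bullet> (S *v w)"
  define be where "be = w \<bullet> (S *v x)"
  define ga where "ga = x \<bullet> (S *v x)"
  have xw: "x \<bullet> (S *v w) = be"
    unfolding be_def using inner_mv_sym[OF symS, of x w] by (simp add: inner_commute)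
  have f: "al + 2*r*be + r^2*ga \<le> 0" for r
  proof -
    have "(w + r *\<^sub>R x) \<bullet> (S *v (w + r *\<^sub>R x)) = al + 2*r*be + r^2*ga"
      by (simp add: matrix_vector_right_distrib matrix_vector_mult_scaleR inner_add_left
          inner_add_right xw al_def be_def ga_def power2_eq_square algebra_simps)
    with nsdS[of "w + r *\<^sub>R x"] show ?thesis by simp
  qed
  have ga0: "ga \<le> 0" using nsdS[of x] by (simp add: ga_def)
  show ?thesis
  proof (cases "ga = 0")
    case True
    have "be = 0"
    proof (rule ccontr)
      assume "be \<noteq> 0"
      from f[of "(1 - al)/(2*be)"] True \<open>be \<noteq> 0\<close> show False by (simp add: field_simps)
    qed
    with True show ?thesis by (simp add: be_def ga_def)
  next
    case False
    with ga0 have gn: "ga < 0" by simp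
    from f[of "-be/ga"] gn have "al - be^2/ga \<le> 0"
      by (simp add: field_simps power2_eq_square)
    then have "al*ga - be^2 \<ge> 0" using gn
      by (simp add: field_simps)
    then show ?thesis by (simp add: al_def be_def ga_def)
  qed
qed


lemma le_third: "0 \<le> (y::real) \<Longrightarrow> y \<le> D \<Longrightarrow> 0 < D \<Longrightarrow> (1/(3*D)) * y \<le> 1/3"
  by (simp add: field_simps)

lemma improve:
  fixes A P P0 :: "real^'n^'n" and eta :: real
  assumes symP: "transpose P = P" and symP0: "transpose P0 = P0"
    and feasP: "\<And>x. phi A P x \<le> 0"
    and eta: "eta > 0" and slater: "\<And>x. phi A P0 x \<le> - eta * (x \<bullet> x)"
    and Sne: "P ** A + transpose A ** P + 2 *\<^sub>R (P ** P) \<noteq> 0"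
  shows "\<exists>Q. transpose Q = Q \<and> (\<forall>x. phi A Q x \<le> 0) \<and> trace P < trace Q"
proof -
  define S where "S = P ** A + transpose A ** P + 2 *\<^sub>R (P ** P)"
  have symS: "transpose S = S"
    by (simp add: S_def transpose_add matrix_transpose_mul transpose_scalar symP add_ac)
  have quadS: "x \<bullet> (S *v x) = 2 * phi A P x" for x
  proof -
    have "S *v x = P *v (A *v x) + transpose A *v (P *v x) + 2 *\<^sub>R (P *v (P *v x))"
      by (simp add: S_def mv_add mv_scaleR matrix_vector_mul_assoc)
    moreover have "x \<bullet> (P *v (A *v x)) = (P *v x) \<bullet> (A *v x)"
      by (rule inner_mv_sym[OF symP])
    moreover have "x \<bullet> (transpose A *v (P *v x)) = (A *v x) \<bullet> (P *v x)"
      using inner_mv[of x "transpose A" "P *v x"] by simp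
    moreover have "x \<bullet> (P *v (P *v x)) = (P *v x) \<bullet> (P *v x)"
      by (rule inner_mv_sym[OF symP])
    ultimately show ?thesis
      by (simp add: phi_def inner_add_right inner_commute algebra_simps)
  qed
  have nsdS: "\<And>y. y \<bullet> (S *v y) \<le> 0" using quadS feasP by (simp add: mult_nonpos_nonneg)
  have "S \<noteq> 0" using Sne by (simp add: S_def)
  then obtain w where w: "S *v w \<noteq> 0"
    by (metis matrix_eq matrix_vector_mult_0)
  define v where "v = S *v w"
  define V where "V = v \<bullet> v"
  have V0: "V > 0" using w by (simp add: V_def v_def)
  define c where "c = -2 * (w \<bullet> (S *v w))"
  have c0: "c \<ge> 0" using nsdS[of w] by (simp add: c_def)
  have ha: "(v \<bullet> x)^2 \<le> c * (- phi A P x)" for x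
  proof -
    have "v \<bullet> x = w \<bullet> (S *v x)"
      using inner_mv[of w S x] symS by (simp add: v_def)
    then have "(v \<bullet> x)^2 \<le> (w \<bullet> (S *v w)) * (x \<bullet> (S *v x))"
      using CS_nsd[OF symS nsdS] by simp
    also have "\<dots> = c * (- phi A P x)" by (simp add: quadS c_def)
    finally show ?thesis .
  qed
  define beta where "beta = norm (transpose A *v v) + 2 * norm (P *v v) + 2 * norm (P0 *v v)"
  have beta0: "beta \<ge> 0" by (simp add: beta_def)
  define d where "d = \<bar>trace P0 - trace P\<bar>"
  define kap where "kap = V / (2 * (d + 1))"
  have d0: "d \<ge> 0" by (simp add: d_def)
  have kap0: "kap > 0" using V0 d0 by (simp add: kap_def)
  define Dn where "Dn = 1 + kap + c*beta^2/(2*kap*eta) + c*V"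
  have X0: "c*beta^2/(2*kap*eta) \<ge> 0" using c0 kap0 eta by simp
  have cV0: "c*V \<ge> 0" using c0 V0 by simp
  have Dn0: "Dn \<ge> 1" using X0 cV0 kap0 by (simp add: Dn_def)
  define eps where "eps = 1/(3*Dn)"
  have eps0: "eps > 0" using Dn0 by (simp add: eps_def)
  have eps1: "eps \<le> 1" using Dn0 by (simp add: eps_def field_simps)
  have k3: "kap*eps \<le> 1/3"
    using le_third[of kap Dn] kap0 X0 cV0 Dn0 by (simp add: eps_def Dn_def mult.commute)
  have b3: "eps*c*beta^2/(2*kap*eta) \<le> 1/3"
    using le_third[of "c*beta^2/(2*kap*eta)" Dn] kap0 X0 cV0 Dn0
    by (simp add: eps_def Dn_def)
  have v3: "eps*c*V \<le> 1/3"
    using le_third[of "c*V" Dn] kap0 X0 cV0 Dn0 by (simp add: eps_def Dn_def mult.assoc)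
  define t where "t = kap*eps"
  have t0: "0 \<le> t" "t \<le> 1" using k3 kap0 eps0 by (auto simp: t_def)
  define Q where "Q = (1 - t) *\<^sub>R P + t *\<^sub>R P0 + eps *\<^sub>R outer v"
  have symQ: "transpose Q = Q"
    by (simp add: Q_def transpose_add transpose_scalar symP symP0 outer_sym)
  have trQ: "trace P < trace Q"
  proof -
    have "trace Q = (1-t) * trace P + t * trace P0 + eps * V"
      by (simp add: Q_def trace_add trace_scaleR outer_trace V_def)
    moreover have "t * (trace P0 - trace P) \<ge> - (t * d)"
      using mult_left_mono[of "- \<bar>trace P0 - trace P\<bar>" "trace P0 - trace P" t] t0
      by (simp add: d_def)
    moreover have "t * d < eps * V"
    proof -
      have "kap * d < V" using V0 d0 by (simp add: kap_def field_simps add_nonneg_pos)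
      then show ?thesis using eps0 by (simp add: t_def mult.commute mult.left_commute)
    qed
    ultimately show ?thesis by (simp add: algebra_simps)
  qed
  have phiQ: "phi A Q x \<le> 0" for x
  proof -
    define p where "p = P *v x"
    define p0 where "p0 = P0 *v x"
    define ax where "ax = A *v x"
    define a where "a = v \<bullet> x"
    define m where "m = (1-t) *\<^sub>R p + t *\<^sub>R p0"
    define n where "n = - phi A P x"
    define b where "b = v \<bullet> ax + 2 * (v \<bullet> m)"
    have Qx: "Q *v x = m + (eps * a) *\<^sub>R v"
      by (simp add: Q_def mv_add mv_scaleR outer_mv m_def p_def p0_def a_def)
    have e1: "phi A Q x = m \<bullet> ax + m \<bullet> m + eps * a * b + eps^2 * a^2 * V"
      by (simp add: phi_def Qx ax_def[symmetric] b_def V_def inner_add_left inner_add_right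
          inner_commute power2_eq_square algebra_simps)
    have mm: "m \<bullet> m \<le> (1-t) * (p \<bullet> p) + t * (p0 \<bullet> p0)"
    proof -
      have "(1-t) * (p \<bullet> p) + t * (p0 \<bullet> p0) - m \<bullet> m = t * (1-t) * ((p - p0) \<bullet> (p - p0))"
        by (simp add: m_def inner_add_left inner_add_right inner_diff_left inner_diff_right
            inner_commute algebra_simps power2_eq_square)
      moreover have "t * (1-t) * ((p - p0) \<bullet> (p - p0)) \<ge> 0" using t0 by simp
      ultimately show ?thesis by simp
    qed
    have e2: "m \<bullet> ax + m \<bullet> m \<le> (1-t) * phi A P x + t * phi A P0 x"
      using mm by (simp add: phi_def m_def p_def p0_def ax_def inner_add_left algebra_simps)
    have e3: "(1-t) * phi A P x + t * phi A P0 x \<le> -(1-t) * n - t * eta * (norm x)^2"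
    proof -
      have "t * phi A P0 x \<le> t * (- eta * (x \<bullet> x))"
        using mult_left_mono[OF slater[of x], of t] t0 by simp
      then show ?thesis by (simp add: n_def power2_norm_eq_inner algebra_simps)
    qed
    have hb: "\<bar>b\<bar> \<le> beta * norm x"
    proof -
      have 1: "\<bar>v \<bullet> ax\<bar> \<le> norm (transpose A *v v) * norm x"
        using inner_mv[of v A x] Cauchy_Schwarz_ineq2 by (simp add: ax_def)
      have 2: "v \<bullet> m = (1-t) * ((P *v v) \<bullet> x) + t * ((P0 *v v) \<bullet> x)"
        using inner_mv_sym[OF symP, of v x] inner_mv_sym[OF symP0, of v x]
        by (simp add: m_def p_def p0_def inner_add_right)
      have 3: "\<bar>(P *v v) \<bullet> x\<bar> \<le> norm (P *v v) * norm x" by (rule Cauchy_Schwarz_ineq2)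
      have 4: "\<bar>(P0 *v v) \<bullet> x\<bar> \<le> norm (P0 *v v) * norm x" by (rule Cauchy_Schwarz_ineq2)
      have 5: "\<bar>v \<bullet> m\<bar> \<le> (norm (P *v v) + norm (P0 *v v)) * norm x"
      proof -
        have "\<bar>v \<bullet> m\<bar> \<le> (1-t) * \<bar>(P *v v) \<bullet> x\<bar> + t * \<bar>(P0 *v v) \<bullet> x\<bar>"
          using t0 unfolding 2 by (simp add: abs_triangle_ineq abs_mult order_trans[OF abs_triangle_ineq])
        also have "\<dots> \<le> (1-t) * (norm (P *v v) * norm x) + t * (norm (P0 *v v) * norm x)"
          using t0 3 4 by (intro add_mono mult_left_mono) auto
        also have "\<dots> \<le> (norm (P *v v) * norm x) + (norm (P0 *v v) * norm x)"
          using t0 by (intro add_mono) (auto simp: mult_left_le_one_le mult_le_cancel_right1 mult_left_le)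
        finally show ?thesis by (simp add: algebra_simps)
      qed
      have "\<bar>b\<bar> \<le> \<bar>v \<bullet> ax\<bar> + 2 * \<bar>v \<bullet> m\<bar>" by (simp add: b_def abs_triangle_ineq[THEN order_trans] abs_mult)
      then show ?thesis using 1 5 by (simp add: beta_def algebra_simps)
    qed
    have n0: "n \<ge> 0" using feasP[of x] by (simp add: n_def)
    have ha': "a^2 \<le> c * n" using ha[of x] by (simp add: a_def n_def)
    have "-(1-kap*eps)*n - kap*eps*eta*(norm x)^2 + eps*a*b + eps^2*a^2*V \<le> 0"
      by (rule real_ineq[OF n0 ha' c0 eta kap0 eps0 norm_ge_zero hb beta0 _ k3 b3 v3 eps1])
        (use V0 in simp)
    then show ?thesis using e1 e2 e3 by (simp add: t_def)
  qed
  show ?thesis using symQ trQ phiQ by blast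
qed



lemma quadS:
  fixes A P :: "real^'n^'n"
  assumes symP: "transpose P = P"
  shows "x \<bullet> ((P ** A + transpose A ** P + 2 *\<^sub>R (P ** P)) *v x) = 2 * phi A P x"
proof -
  have "(P ** A + transpose A ** P + 2 *\<^sub>R (P ** P)) *v x = P *v (A *v x) + transpose A *v (P *v x) + 2 *\<^sub>R (P *v (P *v x))"
    by (simp add: mv_add mv_scaleR matrix_vector_mul_assoc)
  moreover have "x \<bullet> (P *v (A *v x)) = (P *v x) \<bullet> (A *v x)"
    by (rule inner_mv_sym[OF symP])
  moreover have "x \<bullet> (transpose A *v (P *v x)) = (A *v x) \<bullet> (P *v x)"
    using inner_mv[of x "transpose A" "P *v x"] by simp
  moreover have "x \<bullet> (P *v (P *v x)) = (P *v x) \<bullet> (P *v x)"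
    by (rule inner_mv_sym[OF symP])
  ultimately show ?thesis
    by (simp add: phi_def inner_add_right inner_commute algebra_simps)
qed

lemma mv_uminus: "(- M) *v x = - (M *v (x::real^'n))"
  by (simp add: matrix_vector_mult_def vec_eq_iff sum_negf)

lemma slater:
  fixes A Q0 :: "real^'n^'n"
  assumes symQ: "transpose Q0 = Q0" and lyap: "Q0 ** A + transpose A ** Q0 = - mat 1"
  shows "\<exists>P0 eta. transpose P0 = P0 \<and> eta > 0 \<and> (\<forall>x. phi A P0 x \<le> - eta * (x \<bullet> x))"
proof -
  obtain K where K: "K > 0" "\<And>x. norm (Q0 *v x) \<le> norm x * K"
    using bounded_linear.pos_bounded[OF matrix_vector_mul_bounded_linear[of Q0]] by blast
  define s where "s = 1 / (4 * K^2)"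
  have s0: "s > 0" using K by (simp add: s_def)
  have key: "(Q0 *v x) \<bullet> (A *v x) = - (x \<bullet> x) / 2" for x
  proof -
    have "x \<bullet> ((Q0 ** A + transpose A ** Q0) *v x) = - (x \<bullet> x)"
      by (simp add: lyap mv_uminus)
    moreover have "x \<bullet> ((Q0 ** A + transpose A ** Q0) *v x) = 2 * ((Q0 *v x) \<bullet> (A *v x))"
      using inner_mv_sym[OF symQ, of x "A *v x"] inner_mv[of x "transpose A" "Q0 *v x"]
      by (simp add: mv_add matrix_vector_mul_assoc[symmetric] inner_add_right inner_commute)
    ultimately show ?thesis by simp
  qed
  have "phi A (s *\<^sub>R Q0) x \<le> - (s/4) * (x \<bullet> x)" for x
  proof -
    have "phi A (s *\<^sub>R Q0) x = s * ((Q0 *v x) \<bullet> (A *v x)) + s^2 * (norm (Q0 *v x))^2"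
      by (simp add: phi_def mv_scaleR power2_norm_eq_inner power2_eq_square)
        (simp add: power2_norm_eq_inner[symmetric] power2_eq_square)
    also have "\<dots> \<le> s * (- (x \<bullet> x) / 2) + s^2 * (norm x * K)^2"
      using K(2)[of x] s0 by (simp add: key power_mono)
    also have "s^2 * (norm x * K)^2 = s * (x \<bullet> x) / 4"
      using K by (simp add: s_def power2_norm_eq_inner power_mult_distrib field_simps power2_eq_square)
        (simp add: power2_norm_eq_inner[symmetric] power2_eq_square)
    finally show ?thesis by (simp add: algebra_simps)
  qed
  moreover have "transpose (s *\<^sub>R Q0) = s *\<^sub>R Q0" by (simp add: transpose_scalar symQ)
  ultimately show ?thesis using s0 by (intro exI[of _ "s *\<^sub>R Q0"] exI[of _ "s/4"]) auto
qed



type_synonym 'n cm = "complex^'n^'n"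

lemma mat_left: "(mat a :: 'a::comm_ring_1^'n^'n) ** M = (\<chi> i j. a * M$i$j)"
proof -
  have "(\<Sum>k\<in>UNIV. (if i = k then a else 0) * M $ k $ j) = a * M $ i $ j" for i j
  proof -
    have "(\<Sum>k\<in>UNIV. (if i = k then a else 0) * M $ k $ j) = (\<Sum>k\<in>UNIV. if i = k then a * M $ k $ j else 0)"
      by (rule sum.cong) auto
    then show ?thesis by simp
  qed
  then show ?thesis by (simp add: matrix_matrix_mult_def mat_def vec_eq_iff)
qed
lemma mat_right: "(M :: 'a::comm_ring_1^'n^'n) ** mat a = (\<chi> i j. a * M$i$j)"
proof -
  have "(\<Sum>k\<in>UNIV. M $ i $ k * (if k = j then a else 0)) = a * M $ i $ j" for i j
  proof -
    have "(\<Sum>k\<in>UNIV. M $ i $ k * (if k = j then a else 0)) = (\<Sum>k\<in>UNIV. if k = j then a * M $ i $ k else 0)"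
      by (rule sum.cong) (auto simp: mult.commute)
    then show ?thesis by simp
  qed
  then show ?thesis by (simp add: matrix_matrix_mult_def mat_def vec_eq_iff)
qed
lemma mat_mult: "(mat a :: 'a::comm_ring_1^'n^'n) ** mat b = mat (a*b)"
  unfolding mat_left by (simp add: mat_def vec_eq_iff)
lemma mat_comm: "(M::'a::comm_ring_1^'n^'n) ** mat a = mat a ** M"
  by (simp add: mat_left mat_right)

lemma mat_diff: "(mat (a - b) :: 'a::comm_ring_1^'n^'n) = mat a - mat b"
  unfolding mat_def vec_eq_iff by simp

lemma mat_add: "(mat (a + b) :: 'a::comm_ring_1^'n^'n) = mat a + mat b"
  unfolding mat_def vec_eq_iff by simp

lemma mm_sub_ldistrib: "(A::'a::comm_ring_1^'n^'n) ** (B - C) = A ** B - A ** C"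
  by (simp add: matrix_matrix_mult_def vec_eq_iff sum_subtractf right_diff_distrib)

lemma mm_sub_rdistrib: "((B - C)::'a::comm_ring_1^'n^'n) ** A = B ** A - C ** A"
  by (simp add: matrix_matrix_mult_def vec_eq_iff sum_subtractf left_diff_distrib)

lemma mm_add_rdistrib: "((B + C)::'a::comm_ring_1^'n^'n) ** A = B ** A + C ** A"
  by (simp add: matrix_matrix_mult_def vec_eq_iff sum.distrib distrib_right)

lemma mm_sum_left:
  fixes f :: "'i \<Rightarrow> 'a::comm_ring_1^'n^'n"
  shows "(\<Sum>i\<in>I. f i) ** (A::'a::comm_ring_1^'n^'n) = (\<Sum>i\<in>I. f i ** A)"
proof (induction I rule: infinite_finite_induct)
  case (insert x F)
  then show ?case using mm_add_rdistrib[of "f x" "sum f F" A] by simp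
qed auto

lemma mm_sum_right:
  fixes f :: "'i \<Rightarrow> 'a::comm_ring_1^'n^'n"
  shows "(A::'a::comm_ring_1^'n^'n) ** (\<Sum>i\<in>I. f i) = (\<Sum>i\<in>I. A ** f i)"
proof (induction I rule: infinite_finite_induct)
  case (insert x F)
  then show ?case using matrix_add_ldistrib[of A "f x" "sum f F"] by simp
qed auto

lemma mat_ofreal: "mat (complex_of_real r) ** (M::complex^'n^'n) = r *\<^sub>R M"
proof -
  have "\<And>z::complex. complex_of_real r * z = r *\<^sub>R z" by (simp add: scaleR_conv_of_real)
  then show ?thesis unfolding mat_left by (simp add: vec_eq_iff)
qed

lemma mat_mv: "(mat a :: 'a::comm_ring_1^'n^'n) *v x = a *s x"
proof -
  have "(\<Sum>k\<in>UNIV. (if i = k then a else 0) * x $ k) = a * x $ i" for i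
  proof -
    have "(\<Sum>k\<in>UNIV. (if i = k then a else 0) * x $ k) = (\<Sum>k\<in>UNIV. if i = k then a * x $ k else 0)"
      by (rule sum.cong) auto
    then show ?thesis by simp
  qed
  then show ?thesis by (simp add: matrix_vector_mult_def mat_def vec_eq_iff)
qed

lemma invertible_transpose_gen:
  fixes M :: "'a::field^'n^'n"
  assumes "invertible M" shows "invertible (transpose M)"
proof -
  from assms obtain M' where "M ** M' = mat 1" "M' ** M = mat 1" by (auto simp: invertible_def)
  then show ?thesis unfolding invertible_def
  proof (intro exI[of _ "transpose M'"] conjI)
    show "transpose M ** transpose M' = mat 1"
      using \<open>M' ** M = mat 1\<close> by (simp flip: matrix_transpose_mul)
    show "transpose M' ** transpose M = mat 1"
      using \<open>M ** M' = mat 1\<close> by (simp flip: matrix_transpose_mul)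
  qed
qed

lemma invertible_ker:
  fixes M :: "'a::field^'n^'n"
  assumes "\<And>x. M *v x = 0 \<Longrightarrow> x = 0" shows "invertible M"
  using assms by (simp add: invertible_left_inverse matrix_left_invertible_ker)

lemma invertible_cancel_left:
  fixes M Y :: "'a::field^'n^'n"
  assumes "invertible M" "M ** Y = 0" shows "Y = 0"
proof -
  from assms obtain M' where "M' ** M = mat 1" by (auto simp: invertible_def)
  then have "Y = M' ** (M ** Y)" by (simp add: matrix_mul_assoc)
  then show ?thesis using assms by simp
qed

lemma invertible_cancel_right:
  fixes M Y :: "'a::field^'n^'n"
  assumes "invertible M" "Y ** M = 0" shows "Y = 0"
proof -
  from assms obtain M' where "M ** M' = mat 1" by (auto simp: invertible_def)
  then have "Y = (Y ** M) ** M'" by (simp flip: matrix_mul_assoc)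
  then show ?thesis using assms by simp
qed

fun prodm :: "'a::comm_ring_1 list \<Rightarrow> 'a^'n^'n \<Rightarrow> 'a^'n^'n" where
  "prodm [] K = mat 1"
| "prodm (a # as) K = (K - mat a) ** prodm as K"

lemma sylvester:
  fixes N K :: "'a::field^'n^'n"
  assumes dich: "\<And>a. invertible (N - mat a) \<or> invertible (K - mat a)"
  shows "N ** Y = Y ** K \<Longrightarrow> Y ** prodm as K = 0 \<Longrightarrow> Y = 0"
proof (induction as arbitrary: Y)
  case Nil
  then show ?case by simp
next
  case (Cons a as)
  define Y' where "Y' = Y ** (K - mat a)"
  have Y'2: "Y' = (N - mat a) ** Y"
    using Cons.prems(1) mat_comm[of Y a] by (simp add: Y'_def mm_sub_ldistrib mm_sub_rdistrib)
  have "N ** Y' = Y' ** K"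
  proof -
    have "N ** Y' = (N ** Y) ** (K - mat a)" by (simp add: Y'_def matrix_mul_assoc)
    also have "\<dots> = Y ** (K ** (K - mat a))" by (simp add: Cons.prems(1) matrix_mul_assoc)
    also have "K ** (K - mat a) = (K - mat a) ** K"
      using mat_comm[of K a] by (simp add: mm_sub_ldistrib mm_sub_rdistrib)
    finally show ?thesis by (simp add: Y'_def matrix_mul_assoc)
  qed
  moreover have "Y' ** prodm as K = 0"
    using Cons.prems(2) by (simp add: Y'_def matrix_mul_assoc)
  ultimately have "Y' = 0" by (rule Cons.IH)
  then have 1: "(N - mat a) ** Y = 0" "Y ** (K - mat a) = 0" using Y'2 by (auto simp: Y'_def)
  show ?case
  proof (cases "invertible (N - mat a)")
    case True
    then show ?thesis using invertible_cancel_left 1 by blast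
  next
    case False
    then have "invertible (K - mat a)" using dich[of a] by blast
    then show ?thesis using invertible_cancel_right 1 by blast
  qed
qed



fun mpow :: "'a::comm_ring_1^'n^'n \<Rightarrow> nat \<Rightarrow> 'a^'n^'n" where
  "mpow K 0 = mat 1"
| "mpow K (Suc i) = K ** mpow K i"

definition Ev :: "'a::comm_ring_1^'n^'n \<Rightarrow> 'a poly \<Rightarrow> 'a^'n^'n" where
  "Ev K p = (\<Sum>i\<le>degree p. mat (coeff p i) ** mpow K i)"

lemma Ev_ext:
  assumes "degree p \<le> m"
  shows "Ev K p = (\<Sum>i\<le>m. mat (coeff p i) ** mpow K i)"
  unfolding Ev_def
proof (rule sum.mono_neutral_left)
  show "\<forall>i\<in>{..m} - {..degree p}. mat (coeff p i) ** mpow K i = 0"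
    by (auto simp: coeff_eq_0)
qed (use assms in auto)

lemma Ev_const: "Ev K [:c:] = mat c"
  by (simp add: Ev_def)

lemma mm_uminus_left: "(- A :: 'a::comm_ring_1^'n^'n) ** B = - (A ** B)"
  by (simp add: matrix_matrix_mult_def vec_eq_iff sum_negf)

lemma Ev_lin: "Ev K ([:-a, 1:] * q) = (K - mat a) ** Ev K q"
proof -
  define d where "d = degree q"
  have e: "[:-a, 1:] * q = pCons 0 q + smult (-a) q" by simp
  have deg: "degree ([:-a, 1:] * q) \<le> Suc d"
    using degree_mult_le[of "[:-a, 1:]" q] by (simp add: d_def)
  have "Ev K ([:-a, 1:] * q) = (\<Sum>i\<le>Suc d. mat (coeff ([:-a, 1:] * q) i) ** mpow K i)"
    by (rule Ev_ext[OF deg])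
  also have "\<dots> = (\<Sum>i\<le>Suc d. mat (coeff (pCons 0 q) i + (-a) * coeff q i) ** mpow K i)"
    by (rule sum.cong[OF refl]) (simp only: e coeff_add coeff_smult)
  also have "\<dots> = (\<Sum>i\<le>Suc d. mat (coeff (pCons 0 q) i) ** mpow K i
                 + mat (-a) ** (mat (coeff q i) ** mpow K i))"
    by (rule sum.cong[OF refl]) (simp only: mat_add mm_add_rdistrib matrix_mul_assoc mat_mult)
  also have "\<dots> = (\<Sum>i\<le>Suc d. mat (coeff (pCons 0 q) i) ** mpow K i)
                 + (\<Sum>i\<le>Suc d. mat (-a) ** (mat (coeff q i) ** mpow K i))"
    by (rule sum.distrib)
  also have "(\<Sum>i\<le>Suc d. mat (-a) ** (mat (coeff q i) ** mpow K i)) = mat (-a) ** Ev K q"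
    unfolding mm_sum_right[symmetric] using Ev_ext[of q "Suc d" K] by (simp only: d_def le_Suc_eq order_refl simp_thms)
  also have "(\<Sum>i\<le>Suc d. mat (coeff (pCons 0 q) i) ** mpow K i)
           = (\<Sum>i\<le>d. mat (coeff q i) ** (K ** mpow K i))"
    by (subst sum.atMost_Suc_shift) simp
  also have "\<dots> = (\<Sum>i\<le>d. K ** (mat (coeff q i) ** mpow K i))"
    by (rule sum.cong) (simp_all add: matrix_mul_assoc mat_comm)
  also have "\<dots> = K ** Ev K q" by (simp add: mm_sum_right Ev_def d_def)
  also have "mat (-a) = - (mat a :: 'a^'n^'n)" by (simp add: mat_def vec_eq_iff)
  finally show ?thesis
    by (simp add: mm_sub_rdistrib mm_uminus_left)
qed


lemma Ev_factor:
  fixes K :: "complex^'n^'n"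
  shows "p \<noteq> 0 \<Longrightarrow> \<exists>as c. c \<noteq> 0 \<and> Ev K p = mat c ** prodm as K"
proof (induction "degree p" arbitrary: p rule: less_induct)
  case less
  show ?case
  proof (cases "degree p = 0")
    case True
    then have "p = [:coeff p 0:]" by (rule degree_0_id[symmetric])
    moreover have "coeff p 0 \<noteq> 0" using less.prems True by (metis leading_coeff_0_iff)
    ultimately show ?thesis
      by (intro exI[of _ "[]"] exI[of _ "coeff p 0"]) (metis Ev_const prodm.simps(1) matrix_mul_rid)
  next
    case False
    then have "\<not> constant (poly p)" by (simp add: constant_degree)
    then obtain z where "poly p z = 0" using fundamental_theorem_of_algebra by blast
    then obtain q where pq: "p = [:-z, 1:] * q" by (auto simp: poly_eq_0_iff_dvd elim: dvdE)
    have q0: "q \<noteq> 0" using less.prems pq by auto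
    have "degree p = degree [:-z, 1:] + degree q" unfolding pq by (rule degree_mult_eq) (use q0 in auto)
    then have "degree p = degree q + 1" by simp
    then have "degree q < degree p" by simp
    from less.hyps[OF this q0] obtain as c where c: "c \<noteq> 0" "Ev K q = mat c ** prodm as K" by blast
    have "Ev K p = (K - mat z) ** (mat c ** prodm as K)" unfolding pq Ev_lin c(2) ..
    also have "\<dots> = mat c ** prodm (z # as) K"
      by (simp add: matrix_mul_assoc mat_comm)
    finally show ?thesis using c by blast
  qed
qed

lemma sum_delta_mat:
  fixes f :: "nat \<Rightarrow> 'a::comm_ring_1^'n^'n"
  assumes "finite S"
  shows "(\<Sum>k\<in>S. mat (if k = j then 1 else 0) ** f k) = (if j \<in> S then f j else 0)"
proof -
  have "(\<Sum>k\<in>S. mat (if k = j then 1 else 0) ** f k) = (\<Sum>k\<in>S. if k = j then f k else 0)"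
    by (rule sum.cong) auto
  then show ?thesis using assms by simp
qed

lemma Ev_dep_gen:
  fixes K :: "complex^'n^'n"
  assumes "i < j" "mpow K i = mpow K j"
  shows "\<exists>p. p \<noteq> 0 \<and> Ev K p = 0"
proof -
  define p :: "complex poly" where "p = monom 1 j - monom 1 i"
  have cp: "coeff p k = (if k = j then 1 else 0) - (if k = i then 1 else 0)" for k
    by (auto simp: p_def)
  have dp: "degree p \<le> j" using assms(1) by (intro degree_le) (auto simp: cp)
  have p0: "p \<noteq> 0" using assms(1) cp[of j] by auto
  have "Ev K p = (\<Sum>k\<le>j. mat (if k = j then 1 else 0) ** mpow K k - mat (if k = i then 1 else 0) ** mpow K k)"
    unfolding Ev_ext[OF dp] cp by (rule sum.cong[OF refl]) (simp only: mat_diff mm_sub_rdistrib)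
  also have "\<dots> = mpow K j - mpow K i"
    using assms(1) by (simp add: sum_subtractf sum_delta_mat)
  finally show ?thesis using p0 assms(2) by auto
qed

lemma Ev_dep:
  fixes K :: "complex^'n^'n"
  shows "\<exists>p. p \<noteq> 0 \<and> Ev K p = 0"
proof -
  define D where "D = DIM(complex^'n^'n)"
  show ?thesis
  proof (cases "inj_on (mpow K) {..D}")
    case False
    then obtain i j where ij: "i \<noteq> j" "mpow K i = mpow K j"
      by (auto simp: inj_on_def)
    show ?thesis
    proof (cases "i < j")
      case True then show ?thesis using Ev_dep_gen ij by blast
    next
      case False then have "j < i" using ij by simp
      then show ?thesis using Ev_dep_gen ij by metis
    qed
  next
    case True
    define S where "S = mpow K ` {..D}"
    have "card S = Suc D" using True by (simp add: S_def card_image)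
    then have "dependent S" by (intro dependent_biggerset) (auto simp: D_def)
    then obtain T u v0 where T: "finite T" "T \<subseteq> S" "(\<Sum>v\<in>T. u v *\<^sub>R v) = 0" "v0 \<in> T" "u v0 \<noteq> 0"
      unfolding dependent_explicit by blast
    define c where "c k = (if mpow K k \<in> T then u (mpow K k) else 0)" for k
    define p :: "complex poly" where "p = (\<Sum>k\<le>D. monom (complex_of_real (c k)) k)"
    have cp: "coeff p k = (if k \<le> D then complex_of_real (c k) else 0)" for k
      by (simp add: p_def coeff_sum)
    have dp: "degree p \<le> D" by (intro degree_le) (auto simp: cp)
    obtain k0 where k0: "k0 \<le> D" "v0 = mpow K k0" using T(2,4) by (auto simp: S_def)
    have p0: "p \<noteq> 0"
    proof
      assume "p = 0"
      then have "coeff p k0 = 0" by simp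
      then show False using cp[of k0] k0 T(4,5) by (simp add: c_def)
    qed
    have "Ev K p = (\<Sum>k\<le>D. c k *\<^sub>R mpow K k)"
      unfolding Ev_ext[OF dp] by (rule sum.cong[OF refl]) (simp add: cp mat_ofreal)
    also have "\<dots> = (\<Sum>v\<in>S. if v \<in> T then u v *\<^sub>R v else 0)"
      unfolding S_def sum.reindex[OF True] by (rule sum.cong[OF refl]) (simp add: c_def)
    also have "\<dots> = (\<Sum>v\<in>S \<inter> T. u v *\<^sub>R v)"
      by (rule sum.inter_restrict[symmetric]) (simp add: S_def)
    also have "S \<inter> T = T" using T(2) by blast
    finally show ?thesis using T(3) p0 by auto
  qed
qed

lemma annih:
  fixes K :: "complex^'n^'n"
  shows "\<exists>as. prodm as K = 0"
proof -
  obtain p where p: "p \<noteq> 0" "Ev K p = 0" using Ev_dep by blast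
  obtain as c where c: "c \<noteq> 0" "Ev K p = mat c ** prodm as K" using Ev_factor[OF p(1)] by blast
  have "prodm as K = mat (1/c) ** (mat c ** prodm as K)"
    using c(1) by (simp add: matrix_mul_assoc mat_mult)
  then show ?thesis using c p by auto
qed


lemma cmat_mult: "cmat (X ** Z) = cmat X ** cmat Z"
  by (simp add: cmat_def matrix_matrix_mult_def vec_eq_iff)

lemma cmat_transpose: "cmat (transpose X) = transpose (cmat X)"
  by (simp add: cmat_def transpose_def vec_eq_iff)

lemma cmat_add: "cmat (X + Z) = cmat X + cmat Z"
  by (simp add: cmat_def vec_eq_iff)

lemma cmat_eq0: "cmat X = 0 \<Longrightarrow> X = 0"
  by (simp add: cmat_def vec_eq_iff)

lemma cmat_0: "cmat 0 = 0"
  by (simp add: cmat_def vec_eq_iff)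

lemma mv_uminus_gen: "(- M) *v x = - (M *v (x::'a::comm_ring_1^'n))"
  by (simp add: matrix_vector_mult_def vec_eq_iff sum_negf)

lemma mm_uminus_right: "(A :: 'a::comm_ring_1^'n^'n) ** (- B) = - (A ** B)"
  by (simp add: matrix_matrix_mult_def vec_eq_iff sum_negf)

lemma transpose_diff_gen: "transpose (X - Z) = transpose X - transpose (Z :: 'a::comm_ring_1^'n^'n)"
  by (simp add: transpose_def vec_eq_iff)

lemma lyap_inj:
  fixes A Q :: "real^'n^'n"
  assumes hurwitz: "\<And>l. is_eigenvalue A l \<Longrightarrow> Re l < 0"
    and eq: "Q ** A + transpose A ** Q = 0"
  shows "Q = 0"
proof -
  define M where "M = cmat A"
  define Y where "Y = cmat Q"
  define N where "N = transpose M"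
  define K where "K = - M"
  have "cmat (Q ** A + transpose A ** Q) = 0" using eq by (simp add: cmat_0)
  then have "Y ** M + N ** Y = 0"
    by (simp add: cmat_add cmat_mult cmat_transpose Y_def M_def N_def)
  then have NY: "N ** Y = Y ** K"
    by (simp add: K_def mm_uminus_right eq_neg_iff_add_eq_0 add.commute)
  have eig: "a = b" if "M *v x = b *s x" "x \<noteq> 0" "Re b \<ge> 0" for x b a
    using hurwitz[of b] that by (force simp: is_eigenvalue_def M_def)
  have dich: "invertible (N - mat a) \<or> invertible (K - mat a)" for a
  proof (cases "Re a \<ge> 0")
    case True
    have "invertible (M - mat a)"
    proof (rule invertible_ker)
      fix x assume "(M - mat a) *v x = 0"
      then have "M *v x = a *s x" by (simp add: matrix_vector_mult_diff_rdistrib mat_mv)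
      then show "x = 0" using eig[of x a] True hurwitz[of a] by (force simp: is_eigenvalue_def M_def)
    qed
    then have "invertible (N - mat a)"
      using invertible_transpose_gen by (fastforce simp: N_def transpose_diff_gen)
    then show ?thesis by simp
  next
    case False
    have "invertible (K - mat a)"
    proof (rule invertible_ker)
      fix x assume "(K - mat a) *v x = 0"
      then have "M *v x = (-a) *s x"
        by (simp add: K_def matrix_vector_mult_diff_rdistrib mat_mv mv_uminus_gen
            eq_neg_iff_add_eq_0 neg_eq_iff_add_eq_0 algebra_simps vec_eq_iff)
      then show "x = 0" using False hurwitz[of "-a"] by (force simp: is_eigenvalue_def M_def)
    qed
    then show ?thesis by simp
  qed
  obtain as where "prodm as K = 0" using annih by blast
  then have "Y ** prodm as K = 0" by simp
  with sylvester[OF dich NY] have "Y = 0" by blast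
  then show ?thesis by (simp add: Y_def cmat_eq0)
qed


lemma transpose_add_gen: "transpose (X + Z) = transpose X + transpose (Z :: 'a::comm_ring_1^'n^'n)"
  by (simp add: transpose_def vec_eq_iff)

lemma lyap_exists:
  fixes A :: "real^'n^'n"
  assumes hurwitz: "\<And>l. is_eigenvalue A l \<Longrightarrow> Re l < 0"
  shows "\<exists>Q. transpose Q = Q \<and> Q ** A + transpose A ** Q = - mat 1"
proof -
  define L where "L = (\<lambda>Q::real^'n^'n. Q ** A + transpose A ** Q)"
  have lin: "linear L"
  proof (rule linearI)
    show "L (b1 + b2) = L b1 + L b2" for b1 b2
      by (simp add: L_def mm_add_rdistrib matrix_add_ldistrib algebra_simps)
    show "L (r *\<^sub>R b) = r *\<^sub>R L b" for r b
      by (simp add: L_def scalar_matrix_assoc[symmetric] matrix_scalar_ac scaleR_right_distrib)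
  qed
  have "inj L"
  proof (rule injI)
    fix x y assume "L x = L y"
    then have "L (x - y) = 0" using linear_diff[OF lin] by simp
    then have "x - y = 0" using lyap_inj[of A "x - y", OF hurwitz] by (simp add: L_def)
    then show "x = y" by simp
  qed
  then have "surj L" using linear_inj_imp_surj[OF lin] by blast
  then obtain Q where Q: "L Q = - mat 1" by (metis surjD)
  have LT: "L (transpose Q) = transpose (L Q)"
    by (simp add: L_def matrix_transpose_mul transpose_add_gen add.commute)
  define Qs where "Qs = (1/2) *\<^sub>R (Q + transpose Q)"
  have "L Qs = (1/2) *\<^sub>R (L Q + L (transpose Q))"
    unfolding Qs_def using linear_add[OF lin] linear_scale[OF lin] by simp
  also have "\<dots> = - mat 1" using Q LT by (simp add: transpose_def mat_def vec_eq_iff)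
  finally have 1: "Qs ** A + transpose A ** Qs = - mat 1" by (simp add: L_def)
  have "transpose Qs = Qs"
    by (simp add: Qs_def transpose_scalar transpose_add_gen add.commute)
  with 1 show ?thesis by blast
qed


theorem mainTheorem1:
  fixes A P :: "real^'n^'n"
    and U :: "real^'n \<Rightarrow> real"
    and fU :: "real^'n \<Rightarrow> real^'n"
  assumes full_rank: "rank A = CARD('n)"
    and hurwitz: "\<And>l. is_eigenvalue A l \<Longrightarrow> Re l < 0"
    and symP: "transpose P = P"
    and U_def: "\<And>x. U x = (1/2) * (x \<bullet> (P *v x))"
    and fU_def: "\<And>x. fU x = (A + P) *v x"
  shows "(\<forall>x. (U has_derivative (\<lambda>h. (P *v x) \<bullet> h)) (at x)
            \<and> A *v x = - (P *v x) + fU x)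
         \<and> (optimal A P \<longrightarrow>
              P ** A + transpose A ** P + 2 *\<^sub>R (P ** P) = 0
            \<and> (\<forall>x. (P *v x) \<bullet> fU x = 0))"
proof (intro conjI allI impI)
  fix x :: "real^'n"
  have Ueq: "U = (\<lambda>x. (1/2) * (x \<bullet> (P *v x)))" using U_def by auto
  have "((\<lambda>x. (1/2) * (x \<bullet> (P *v x))) has_derivative
          (\<lambda>h. (1/2) * (h \<bullet> (P *v x) + x \<bullet> (P *v h)))) (at x)"
    by (auto intro!: derivative_eq_intros bounded_linear_imp_has_derivative)
  moreover have "(\<lambda>h. (1/2) * (h \<bullet> (P *v x) + x \<bullet> (P *v h))) = (\<lambda>h. (P *v x) \<bullet> h)"
    using inner_mv_sym[OF symP, of x] by (auto simp: inner_commute)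
  ultimately show "(U has_derivative (\<lambda>h. (P *v x) \<bullet> h)) (at x)" using Ueq by simp
  show "A *v x = - (P *v x) + fU x" by (simp add: fU_def mv_add)
next
  assume opt: "optimal A P"
  show S0: "P ** A + transpose A ** P + 2 *\<^sub>R (P ** P) = 0"
  proof (rule ccontr)
    assume Sne: "P ** A + transpose A ** P + 2 *\<^sub>R (P ** P) \<noteq> 0"
    obtain Q0 where "transpose Q0 = Q0" "Q0 ** A + transpose A ** Q0 = - mat 1"
      using lyap_exists[OF hurwitz] by blast
    then obtain P0 eta where P0: "transpose P0 = P0" "eta > 0" "\<forall>x. phi A P0 x \<le> - eta * (x \<bullet> x)"
      using slater by blast
    have feasP: "\<And>x. phi A P x \<le> 0"
      using opt symP by (simp add: optimal_def feasible_def nsd_iff phi_def)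
    obtain Q where Q: "transpose Q = Q" "\<forall>x. phi A Q x \<le> 0" "trace P < trace Q"
      using improve[OF symP P0(1) feasP P0(2) _ Sne] P0(3) by blast
    have "feasible A Q" using Q by (simp add: feasible_def nsd_iff phi_def)
    then have "trace Q \<le> trace P" using opt by (simp add: optimal_def)
    with Q(3) show False by simp
  qed
  fix x :: "real^'n"
  have "x \<bullet> ((P ** A + transpose A ** P + 2 *\<^sub>R (P ** P)) *v x) = 2 * phi A P x"
    by (rule quadS[OF symP])
  then have "phi A P x = 0" using S0 by simp
  then show "(P *v x) \<bullet> fU x = 0" by (simp add: phi_def fU_def mv_add inner_add_right)
qed


end
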